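(* Let $W$ be an instance of MAXCUT with maximal cut $(S,\bar S)$. Let $v=\delta_S$ and let $D$ be the diagonal matrix with $D_{ii}=-v_i\sum_jW_{ij}v_j$. The following are equivalent: \begin{enumerate} \item $W$ is GW-bipolar; \item $\delta_S$ is a generalized least eigenvector of $W$; \item $W+D\succeq0$; \item the optimum of the dual GW problem (maximize $\sum_iE_{ii}$ over diagonal $E$ with $W-E\succeq0$) is attained at $E=-D$. \end{enumerate}
   Context: An instance of MAXCUT is a non-negative symmetric $n\times n$ matrix $W$ with zero diagonal and connected support; a maximal cut $(S,\bar S)$ of $\{1,\dots,n\}$ maximizes $\sum_{i\in S,j\notin S}W_{ij}$. The characteristic vector of the cut is $\delta_S\in\{1,-1\}^n$ with $(\delta_S)_i=1$ for $i\in S$ and $-1$ otherwise. A vector $u$ is a generalized least eigenvector of $W$ if $u$ is an eigenvector of $W+\Delta$ for its least eigenvalue, for some diagonal $\Delta$. The primal GW problem is: minimize $\sum_{i,j}P_{ij}W_{ij}$ subject to $P\succeq0$ and $P_{ii}=1$ for all $i$. $W$ is GW-bipolar if some optimal solution of the primal GW problem has the form $uu^T$ with $u\in\{-1,1\}^n$. *)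

theory Defs
  imports "HOL-Analysis.Analysis"
begin

definition sym_mat :: "real^'n^'n \<Rightarrow> bool" where
  "sym_mat A \<longleftrightarrow> (\<forall>i j. A$i$j = A$j$i)"

definition psd :: "real^'n^'n \<Rightarrow> bool" where
  "psd A \<longleftrightarrow> sym_mat A \<and> (\<forall>x. 0 \<le> x \<bullet> (A *v x))"

definition diagonal_mat :: "real^'n^'n \<Rightarrow> bool" where
  "diagonal_mat A \<longleftrightarrow> (\<forall>i j. i \<noteq> j \<longrightarrow> A$i$j = 0)"

definition maxcut_instance :: "real^'n^'n \<Rightarrow> bool" where
  "maxcut_instance W \<longleftrightarrow>
     sym_mat W \<and> (\<forall>i j. 0 \<le> W$i$j) \<and> (\<forall>i. W$i$i = 0) \<and>
     (\<forall>i j. (i, j) \<in> {(a, b). W$a$b > 0}\<^sup>*)"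

definition cut_weight :: "real^'n^'n \<Rightarrow> 'n set \<Rightarrow> real" where
  "cut_weight W S = (\<Sum>i\<in>S. \<Sum>j\<in>-S. W$i$j)"

definition maximal_cut :: "real^'n^'n \<Rightarrow> 'n set \<Rightarrow> bool" where
  "maximal_cut W S \<longleftrightarrow> (\<forall>T. cut_weight W T \<le> cut_weight W S)"

definition char_vec :: "'n set \<Rightarrow> real^'n" where
  "char_vec S = (\<chi> i. if i \<in> S then 1 else -1)"

definition generalized_least_eigenvector :: "real^'n^'n \<Rightarrow> real^'n \<Rightarrow> bool" where
  "generalized_least_eigenvector W u \<longleftrightarrow>
     (\<exists>\<Delta> lam. diagonal_mat \<Delta> \<and> u \<noteq> 0 \<and> (W + \<Delta>) *v u = lam *\<^sub>R u \<and>
        (\<forall>mu x. x \<noteq> 0 \<longrightarrow> (W + \<Delta>) *v x = mu *\<^sub>R x \<longrightarrow> lam \<le> mu))"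

definition gw_feasible :: "real^'n^'n \<Rightarrow> bool" where
  "gw_feasible P \<longleftrightarrow> psd P \<and> (\<forall>i. P$i$i = 1)"

definition gw_objective :: "real^'n^'n \<Rightarrow> real^'n^'n \<Rightarrow> real" where
  "gw_objective W P = (\<Sum>i\<in>UNIV. \<Sum>j\<in>UNIV. P$i$j * W$i$j)"

definition gw_primal_optimal :: "real^'n^'n \<Rightarrow> real^'n^'n \<Rightarrow> bool" where
  "gw_primal_optimal W P \<longleftrightarrow>
     gw_feasible P \<and> (\<forall>Q. gw_feasible Q \<longrightarrow> gw_objective W P \<le> gw_objective W Q)"

definition outer :: "real^'n \<Rightarrow> real^'n^'n" where
  "outer u = (\<chi> i j. u$i * u$j)"

definition gw_bipolar :: "real^'n^'n \<Rightarrow> bool" where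
  "gw_bipolar W \<longleftrightarrow>
     (\<exists>u::real^'n. (\<forall>i. u$i = 1 \<or> u$i = -1) \<and> gw_primal_optimal W (outer u))"

definition gw_dual_feasible :: "real^'n^'n \<Rightarrow> real^'n^'n \<Rightarrow> bool" where
  "gw_dual_feasible W E \<longleftrightarrow> diagonal_mat E \<and> psd (W - E)"

definition gw_dual_optimal_at :: "real^'n^'n \<Rightarrow> real^'n^'n \<Rightarrow> bool" where
  "gw_dual_optimal_at W E \<longleftrightarrow>
     gw_dual_feasible W E \<and>
     (\<forall>F. gw_dual_feasible W F \<longrightarrow> (\<Sum>i\<in>UNIV. F$i$i) \<le> (\<Sum>i\<in>UNIV. E$i$i))"

end

theory Submission
  imports Defs
begin

definition bf :: "real^'n^'n \<Rightarrow> real^'n \<Rightarrow> real^'n \<Rightarrow> real" where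
  "bf A x y = (\<Sum>i\<in>UNIV. \<Sum>j\<in>UNIV. x$i * A$i$j * y$j)"

lemma inner_mv: "x \<bullet> (A *v y) = bf A x y"
  by (simp add: inner_vec_def matrix_vector_mult_def bf_def sum_distrib_left mult.assoc)

lemma bf_sym: assumes "sym_mat A" shows "bf A x y = bf A y x"
proof -
  have "bf A x y = (\<Sum>j\<in>UNIV. \<Sum>i\<in>UNIV. x$i * A$i$j * y$j)"
    unfolding bf_def by (rule sum.swap)
  also have "\<dots> = bf A y x" unfolding bf_def
    using assms unfolding sym_mat_def by (simp add: mult.commute mult.left_commute)
  finally show ?thesis .
qed

lemma bf_add1: "bf A (x + y) z = bf A x z + bf A y z"
  by (simp add: bf_def algebra_simps sum.distrib)
lemma bf_add2: "bf A z (x + y) = bf A z x + bf A z y"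
  by (simp add: bf_def algebra_simps sum.distrib)
lemma bf_scale1: "bf A (c *\<^sub>R x) z = c * bf A x z"
  by (simp add: bf_def sum_distrib_left algebra_simps)
lemma bf_scale2: "bf A z (c *\<^sub>R x) = c * bf A z x"
  by (simp add: bf_def sum_distrib_left algebra_simps)

lemma bf_expand: assumes "sym_mat A"
  shows "bf A (x + t *\<^sub>R z) (x + t *\<^sub>R z) = bf A x x + 2*t*bf A z x + t^2 * bf A z z"
  using bf_sym[OF assms, of x z]
  by (simp add: bf_add1 bf_add2 bf_scale1 bf_scale2 power2_eq_square algebra_simps)

lemma quad_zero: fixes a b :: real
  assumes "\<And>t. 0 \<le> 2*t*a + t^2*b" shows "a = 0"
proof (rule ccontr)
  assume a: "a \<noteq> 0"
  define B where "B = \<bar>b\<bar> + 1"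
  have B: "B > 0" "\<bar>b\<bar> \<le> B" unfolding B_def by auto
  have "0 \<le> 2*(-a/B)*a + (-a/B)^2*b" by (rule assms)
  also have "(-a/B)^2*b \<le> (-a/B)^2 * B"
    by (rule mult_left_mono) (use B in auto)
  also have "(-a/B)^2 * B = a^2/B" using B by (simp add: power2_eq_square field_simps)
  finally have "0 \<le> - 2*a^2/B + a^2/B" using B by (simp add: power2_eq_square field_simps)
  hence "0 \<le> -(a^2/B)" by simp
  moreover have "a^2/B > 0" using a B by simp
  ultimately show False by simp
qed

lemma psd_kernel: assumes "psd C" and "x \<bullet> (C *v x) = 0" shows "C *v x = 0"
proof -
  have s: "sym_mat C" and p: "\<And>y. 0 \<le> bf C y y" using assms(1) unfolding psd_def by (auto simp: inner_mv)
  have "bf C z x = 0" for z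
  proof (rule quad_zero[where b="bf C z z"])
    fix t
    show "0 \<le> 2*t*bf C z x + t^2*bf C z z"
      using p[of "x + t *\<^sub>R z"] bf_expand[OF s, of x t z] assms(2) by (simp add: inner_mv)
  qed
  from this[of "C *v x"] have "(C *v x) \<bullet> (C *v x) = 0" by (simp add: inner_mv)
  thus ?thesis by simp
qed

lemma lin_zero: fixes a c :: real assumes "\<And>t. 0 \<le> c + t*a" shows "a = 0"
proof (rule ccontr)
  assume a: "a \<noteq> 0"
  have "0 \<le> c + (-(\<bar>c\<bar>+1)/a)*a" by (rule assms)
  also have "\<dots> = c - (\<bar>c\<bar>+1)" using a by simp
  finally show False by simp
qed

definition ev :: "'n \<Rightarrow> real^'n" where "ev k = (\<chi> i. if i = k then 1 else 0)"

lemma delta_sum: fixes k :: "'a::finite" shows "(\<Sum>i\<in>UNIV. (if i = k then 1 else 0) * (f i::real)) = f k"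
proof -
  have "\<And>i. (if i=k then 1 else 0) * f i = (if i = k then f i else 0)" by simp
  thus ?thesis by (simp add: sum.delta sum.delta')
qed
lemma delta_sum2: fixes k :: "'a::finite" shows "(\<Sum>i\<in>UNIV. f i * (if i = k then 1 else 0)) = (f k::real)"
  using delta_sum[of k f] by (simp add: mult.commute)

lemma bf_ev1: "bf A (ev k) x = (\<Sum>j\<in>UNIV. A$k$j * x$j)"
  unfolding bf_def ev_def by (simp add: mult.assoc delta_sum flip: sum_distrib_left)
lemma bf_ev2: "bf A x (ev k) = (\<Sum>i\<in>UNIV. x$i * A$i$k)"
  unfolding bf_def ev_def by (simp add: delta_sum2)
lemma bf_ev: "bf A (ev k) (ev k) = A$k$k"
  unfolding bf_ev1 by (simp add: ev_def delta_sum2)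

lemma bf_outer: "bf (\<chi> i j. a$i * b$j * d) x y = (a \<bullet> x) * (b \<bullet> y) * d"
  by (simp add: bf_def inner_vec_def sum_distrib_left sum_distrib_right algebra_simps) (rule sum.swap)

lemma bf_diff: "bf (A - B) x y = bf A x y - bf B x y"
  by (simp add: bf_def algebra_simps sum_subtractf)

lemma psd_nonneg: "psd Q \<Longrightarrow> 0 \<le> bf Q x x"
  unfolding psd_def by (simp add: inner_mv[symmetric])

lemma psd_sym: "psd Q \<Longrightarrow> sym_mat Q" unfolding psd_def by simp

lemma psd_row_zero: assumes "psd Q" "Q$k$k = 0" shows "Q$k$j = 0"
proof -
  have "2 * bf Q (ev k) (ev j) = 0"
  proof (rule lin_zero[where c="bf Q (ev j) (ev j)"])
    fix t
    have "0 \<le> bf Q (ev j + t *\<^sub>R ev k) (ev j + t *\<^sub>R ev k)" by (rule psd_nonneg[OF assms(1)])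
    also have "\<dots> = bf Q (ev j) (ev j) + t * (2 * bf Q (ev k) (ev j))"
      using bf_expand[OF psd_sym[OF assms(1)], of "ev j" t "ev k"] assms(2) by (simp add: bf_ev)
    finally show "0 \<le> bf Q (ev j) (ev j) + t * (2 * bf Q (ev k) (ev j))" .
  qed
  thus ?thesis unfolding bf_ev1 by (simp add: ev_def delta_sum2)
qed

lemma trace_psd_aux:
  assumes "finite K" "psd A"
  shows "\<forall>Q. psd Q \<and> (\<forall>i j. i \<notin> K \<longrightarrow> Q$i$j = 0) \<longrightarrow> 0 \<le> (\<Sum>i\<in>UNIV. \<Sum>j\<in>UNIV. Q$i$j * A$i$j)"
  using assms(1)
proof (induction K rule: finite_induct)
  case empty
  show ?case by auto
next
  case (insert k K)
  show ?case
  proof (intro allI impI)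
    fix Q :: "real^'a^'a" assume h: "psd Q \<and> (\<forall>i j. i \<notin> insert k K \<longrightarrow> Q$i$j = 0)"
    have pQ: "psd Q" and z: "\<And>i j. i \<notin> insert k K \<Longrightarrow> Q$i$j = 0" using h by auto
    have sQ: "sym_mat Q" using psd_sym[OF pQ] .
    show "0 \<le> (\<Sum>i\<in>UNIV. \<Sum>j\<in>UNIV. Q$i$j * A$i$j)"
    proof (cases "Q$k$k = 0")
      case True
      have "\<forall>i j. i \<notin> K \<longrightarrow> Q$i$j = 0"
        using z psd_row_zero[OF pQ True] by (metis insert_iff)
      thus ?thesis using insert.IH pQ by blast
    next
      case False
      have dpos: "Q$k$k > 0" using psd_nonneg[OF pQ, of "ev k"] False by (simp add: bf_ev)
      define c where "c = (\<chi> i. Q$i$k)"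
      define R where "R = (\<chi> i j. c$i * c$j * (1 / Q$k$k))"
      define Q' where "Q' = Q - R"
      have sQ': "sym_mat Q'" using sQ unfolding Q'_def R_def sym_mat_def by (simp add: mult.commute)
      have ck: "bf Q (ev k) x = c \<bullet> x" for x
        using sQ unfolding sym_mat_def by (simp add: bf_ev1 c_def inner_vec_def mult.commute)
      have "0 \<le> bf Q' x x" for x
      proof -
        define t where "t = - (c \<bullet> x) / Q$k$k"
        have "0 \<le> bf Q (x + t *\<^sub>R ev k) (x + t *\<^sub>R ev k)" by (rule psd_nonneg[OF pQ])
        also have "\<dots> = bf Q x x + 2*t*(c \<bullet> x) + t^2 * Q$k$k"
          by (simp add: bf_expand[OF sQ] ck bf_ev)
        also have "\<dots> = bf Q x x - (c \<bullet> x) * (c \<bullet> x) * (1 / Q$k$k)"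
          using dpos unfolding t_def by (simp add: power2_eq_square field_simps)
        also have "\<dots> = bf Q' x x" unfolding Q'_def R_def bf_diff bf_outer by simp
        finally show ?thesis .
      qed
      hence pQ': "psd Q'" using sQ' unfolding psd_def by (simp add: inner_mv)
      have z': "\<forall>i j. i \<notin> K \<longrightarrow> Q'$i$j = 0"
      proof (intro allI impI)
        fix i j assume "i \<notin> K"
        show "Q'$i$j = 0"
        proof (cases "i = k")
          case True
          have "Q$j$k = Q$k$j" using sQ unfolding sym_mat_def by simp
          thus ?thesis using True dpos unfolding Q'_def R_def c_def by simp
        next
          case False
          hence "i \<notin> insert k K" using \<open>i \<notin> K\<close> by simp
          thus ?thesis using z unfolding Q'_def R_def c_def by simp
        qed
      qed
      have IH: "0 \<le> (\<Sum>i\<in>UNIV. \<Sum>j\<in>UNIV. Q'$i$j * A$i$j)" using insert.IH pQ' z' by blast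
      have "(\<Sum>i\<in>UNIV. \<Sum>j\<in>UNIV. Q$i$j * A$i$j) = (\<Sum>i\<in>UNIV. \<Sum>j\<in>UNIV. Q'$i$j * A$i$j) + bf A c c * (1 / Q$k$k)"
        unfolding Q'_def R_def bf_def by (simp add: algebra_simps sum_subtractf sum_divide_distrib)
      moreover have "0 \<le> bf A c c * (1 / Q$k$k)" using psd_nonneg[OF assms(2)] dpos by simp
      ultimately show ?thesis using IH by simp
    qed
  qed
qed

lemma trace_psd: assumes "psd Q" "psd A" shows "0 \<le> (\<Sum>i\<in>UNIV. \<Sum>j\<in>UNIV. Q$i$j * A$i$j)"
  using trace_psd_aux[of UNIV A] assms by auto

lemma diag_mv: assumes "diagonal_mat F" shows "F *v x = (\<chi> i. F$i$i * x$i)"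
proof -
  have "(\<Sum>j\<in>UNIV. F$i$j * x$j) = F$i$i * x$i" for i
  proof -
    have "(\<Sum>j\<in>UNIV. F$i$j * x$j) = (\<Sum>j\<in>UNIV. if j = i then F$i$i * x$i else 0)"
      using assms unfolding diagonal_mat_def by (intro sum.cong) auto
    thus ?thesis by (simp add: sum.delta')
  qed
  thus ?thesis by (simp add: vec_eq_iff matrix_vector_mult_def)
qed

lemma bf_diag: assumes "diagonal_mat F" shows "bf F x y = (\<Sum>i\<in>UNIV. x$i * F$i$i * y$i)"
  using diag_mv[OF assms, of y] inner_mv[of x F y] by (simp add: inner_vec_def mult.assoc)

lemma bf_addm: "bf (A + B) x y = bf A x y + bf B x y"
  by (simp add: bf_def algebra_simps sum.distrib)

lemma bf_W: "bf W x x = (\<Sum>i\<in>UNIV. \<Sum>j\<in>UNIV. x$i * x$j * W$i$j)"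
  unfolding bf_def by (simp add: mult.commute mult.left_commute)

lemma obj_outer: "gw_objective W (outer x) = bf W x x"
  unfolding gw_objective_def outer_def bf_W by simp

lemma feas_outer: assumes "\<forall>i. v$i = 1 \<or> v$i = -1" shows "gw_feasible (outer v)"
proof -
  have "bf (outer v) x x = (v \<bullet> x) * (v \<bullet> x) * 1" for x
    unfolding outer_def using bf_outer[of v v 1 x x] by simp
  hence "0 \<le> bf (outer v) x x" for x by simp
  moreover have "sym_mat (outer v)" unfolding sym_mat_def outer_def by (simp add: mult.commute)
  moreover have "(outer v)$i$i = 1" for i using assms[rule_format, of i] unfolding outer_def by auto
  ultimately show ?thesis unfolding gw_feasible_def psd_def by (simp add: inner_mv)
qed

lemma sum_if_set: "(\<Sum>i\<in>UNIV. if i \<in> A then f i else 0) = sum f (A::'a::finite set)"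
  using sum.inter_restrict[of UNIV f A] by simp

lemma cut_formula:
  assumes "sym_mat W"
  shows "bf W (char_vec T) (char_vec T) = (\<Sum>i\<in>UNIV. \<Sum>j\<in>UNIV. W$i$j) - 4 * cut_weight W T"
proof -
  let ?x = "char_vec T"
  have e: "?x$i * ?x$j * W$i$j = W$i$j - 2*(if i \<in> T then (if j \<in> -T then W$i$j else 0) else 0)
       - 2*(if j \<in> T then (if i \<in> -T then W$j$i else 0) else 0)" for i j
    using assms unfolding sym_mat_def char_vec_def by auto
  have c1: "(\<Sum>i\<in>UNIV. \<Sum>j\<in>UNIV. (if i \<in> T then (if j \<in> -T then W$i$j else 0) else 0)) = cut_weight W T"
  proof -
    have "(\<Sum>i\<in>UNIV. \<Sum>j\<in>UNIV. (if i \<in> T then (if j \<in> -T then W$i$j else 0) else 0))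
       = (\<Sum>i\<in>UNIV. if i \<in> T then (\<Sum>j\<in>UNIV. if j \<in> -T then W$i$j else 0) else 0)"
      by (intro sum.cong) auto
    thus ?thesis unfolding cut_weight_def by (simp only: sum_if_set)
  qed
  have c2: "(\<Sum>i\<in>UNIV. \<Sum>j\<in>UNIV. (if j \<in> T then (if i \<in> -T then W$j$i else 0) else 0)) = cut_weight W T"
    using c1 by (subst sum.swap) simp
  show ?thesis unfolding bf_W e
    by (simp add: sum_subtractf sum_distrib_left[symmetric] c1 c2 del: Compl_iff)
qed

definition Im :: "real \<Rightarrow> real^'n^'n" where "Im m = (\<chi> i j. if i = j then m else 0)"

lemma Im_diag: "diagonal_mat (Im m)" unfolding diagonal_mat_def Im_def by simp
lemma Im_mv: "Im m *v x = m *\<^sub>R x"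
  using diag_mv[OF Im_diag, of m x] by (simp add: Im_def vec_eq_iff)
lemma Im_bf: "bf (Im m) x x = m * (x \<bullet> x)"
  using bf_diag[OF Im_diag, of m x x] by (simp add: Im_def inner_vec_def sum_distrib_left algebra_simps)

lemma min_eig:
  assumes "sym_mat B"
  obtains x0 m where "norm x0 = 1" "B *v x0 = m *\<^sub>R x0" "\<And>x. m * (x \<bullet> x) \<le> bf B x x"
proof -
  have cont: "continuous_on (sphere 0 1) (\<lambda>x::real^'a. bf B x x)"
    unfolding bf_def by (intro continuous_intros)
  have ne: "sphere (0::real^'a) 1 \<noteq> {}" by simp
  obtain x0 where x0: "x0 \<in> sphere 0 1" and mn: "\<And>y. y \<in> sphere 0 1 \<Longrightarrow> bf B x0 x0 \<le> bf B y y"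
    using continuous_attains_inf[OF compact_sphere ne cont] by blast
  define m where "m = bf B x0 x0"
  have n1: "norm x0 = 1" using x0 by simp
  have all: "m * (x \<bullet> x) \<le> bf B x x" for x
  proof (cases "x = 0")
    case True thus ?thesis by (simp add: bf_def)
  next
    case False
    define y where "y = (1 / norm x) *\<^sub>R x"
    have "y \<in> sphere 0 1" unfolding y_def using False by simp
    hence "m \<le> bf B y y" using mn unfolding m_def by blast
    also have "bf B y y = bf B x x / (norm x)^2" unfolding y_def
      by (simp add: bf_scale1 bf_scale2 power2_eq_square)
    finally have "m * (norm x)^2 \<le> bf B x x" using False by (simp add: field_simps)
    thus ?thesis by (simp add: power2_norm_eq_inner)
  qed
  define C where "C = B - Im m"
  have sC: "sym_mat C" using assms unfolding C_def Im_def sym_mat_def by simp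
  have bC: "bf C x x = bf B x x - m * (x \<bullet> x)" for x unfolding C_def by (simp add: bf_diff Im_bf)
  have pC: "psd C" unfolding psd_def using sC all bC by (simp add: inner_mv)
  have "x0 \<bullet> (C *v x0) = 0" using bC[of x0] n1 by (simp add: inner_mv m_def norm_eq_1)
  hence "C *v x0 = 0" by (rule psd_kernel[OF pC])
  hence "B *v x0 = m *\<^sub>R x0" unfolding C_def by (simp add: matrix_vector_mult_diff_rdistrib Im_mv)
  thus ?thesis using that n1 all by blast
qed

lemma gle_to_psd:
  assumes sW: "sym_mat W" and v: "\<forall>i. v$i = 1 \<or> v$i = -1"
    and Dd: "D = (\<chi> i j. if i = j then - v$i * (\<Sum>k\<in>UNIV. W$i$k * v$k) else 0)"
    and g: "generalized_least_eigenvector W v"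
  shows "psd (W + D)"
proof -
  obtain \<Delta> lam where dg: "diagonal_mat \<Delta>" and ev: "(W + \<Delta>) *v v = lam *\<^sub>R v"
    and least: "\<And>mu x. x \<noteq> 0 \<Longrightarrow> (W + \<Delta>) *v x = mu *\<^sub>R x \<Longrightarrow> lam \<le> mu"
    using g unfolding generalized_least_eigenvector_def by blast
  have dd: "\<Delta>$i$i = lam - v$i * (\<Sum>k\<in>UNIV. W$i$k * v$k)" for i
  proof -
    have "(\<Sum>k\<in>UNIV. W$i$k * v$k) + \<Delta>$i$i * v$i = lam * v$i"
      using ev diag_mv[OF dg, of v] unfolding matrix_vector_mult_add_rdistrib
      by (simp add: vec_eq_iff matrix_vector_mult_def)
    thus ?thesis using v[rule_format, of i] by auto
  qed
  have Deq: "\<Delta> = D + Im lam"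
    unfolding vec_eq_iff
  proof (intro allI)
    fix i j show "\<Delta>$i$j = (D + Im lam)$i$j"
      using dg dd[of i] unfolding Dd Im_def diagonal_mat_def by auto
  qed
  define B where "B = W + D"
  have sB: "sym_mat B" using sW unfolding B_def Dd sym_mat_def by simp
  obtain x0 m where n1: "norm x0 = 1" and e0: "B *v x0 = m *\<^sub>R x0" and all: "\<And>x. m * (x \<bullet> x) \<le> bf B x x"
    using min_eig[OF sB] by blast
  have "W + \<Delta> = B + Im lam" unfolding Deq B_def by (simp add: add.assoc)
  hence "(W + \<Delta>) *v x0 = (m + lam) *\<^sub>R x0" using e0
    by (simp add: matrix_vector_mult_add_rdistrib Im_mv scaleR_add_left)
  moreover have "x0 \<noteq> 0" using n1 by auto
  ultimately have "lam \<le> m + lam" using least by blast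
  hence "0 \<le> m" by simp
  hence "0 \<le> bf B x x" for x using all[of x] by (meson inner_ge_zero mult_nonneg_nonneg order_trans)
  thus ?thesis using sB unfolding psd_def B_def by (simp add: inner_mv)
qed

lemma term_bound:
  fixes W ai aj qi qj pi pj s :: real
  assumes "0 \<le> W" "ai = 1 \<or> ai = -1" "aj = 1 \<or> aj = -1" "0 \<le> qi" "qi \<le> s*pi" "0 \<le> qj" "qj \<le> s*pj"
  shows "W*(ai*aj*(1-qi)*(1-qj)) \<le> W*ai*aj - W*ai*aj*qi - W*ai*aj*qj + s^2*W*pi*pj"
proof -
  have m: "qi*qj \<le> (s*pi)*(s*pj)"
    by (rule mult_mono) (use assms in auto)
  have "ai*aj*(qi*qj) \<le> qi*qj" using assms(2,3,4,6) by (auto simp: mult_nonneg_nonneg)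
  hence "ai*aj*(qi*qj) \<le> (s*pi)*(s*pj)" using m by linarith
  hence "W*(ai*aj*(qi*qj)) \<le> W*((s*pi)*(s*pj))" by (rule mult_left_mono) (use assms in auto)
  moreover have "W*(ai*aj*(1-qi)*(1-qj)) = W*ai*aj - W*ai*aj*qi - W*ai*aj*qj + W*(ai*aj*(qi*qj))"
    by (simp add: algebra_simps)
  moreover have "s^2*W*pi*pj = W*((s*pi)*(s*pj))" by (simp add: power2_eq_square algebra_simps)
  ultimately show ?thesis by linarith
qed

lemma diag_poly: fixes e :: real
  shows "(1 - (e/2 + e^2/2))^2 + e + e^2*(3/4 - e/2 - e^2/4) = 1"
  by (simp add: power2_eq_square algebra_simps power4_eq_xxxx field_simps)

lemma perturb:
  assumes sW: "sym_mat W" and zd: "\<forall>i. W$i$i = 0" and nn: "\<forall>i j. 0 \<le> W$i$j"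
    and v: "\<forall>i. v$i = 1 \<or> v$i = -1"
    and Dd: "D = (\<chi> i j. if i = j then - v$i * (\<Sum>k\<in>UNIV. W$i$k * v$k) else 0)"
    and opt: "\<And>Q. gw_feasible Q \<Longrightarrow> bf W v v \<le> gw_objective W Q"
  shows "psd (W + D)"
proof (rule ccontr)
  assume np: "\<not> psd (W + D)"
  have sB: "sym_mat (W + D)" using sW unfolding Dd sym_mat_def by simp
  have Ddg: "diagonal_mat D" unfolding Dd diagonal_mat_def by simp
  obtain x where x: "bf (W + D) x x < 0" using np sB unfolding psd_def by (auto simp: inner_mv not_le)
  define y where "y = (1 / (norm x + 1)) *\<^sub>R x"
  have yb: "(y$i)^2 \<le> 1" for i
  proof -
    have "\<bar>x$i\<bar> \<le> norm x" by (rule component_le_norm_cart)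
    hence "\<bar>y$i\<bar> \<le> 1" unfolding y_def by (simp add: abs_mult field_simps)
    thus ?thesis by (simp add: abs_square_le_1)
  qed
  have "bf (W + D) y y = bf (W + D) x x / (norm x + 1)^2"
    unfolding y_def by (simp add: bf_scale1 bf_scale2 power2_eq_square)
  moreover have "0 < (norm x + 1)^2"
  proof -
    have "0 < norm x + 1" using norm_ge_zero[of x] by linarith
    thus ?thesis by simp
  qed
  ultimately have yneg: "bf (W + D) y y < 0" using x by (simp add: divide_neg_pos)
  define d where "d i = D$i$i" for i
  define g where "g i = (\<Sum>k\<in>UNIV. W$i$k * v$k)" for i
  have dg: "d i = - v$i * g i" for i unfolding d_def g_def Dd by simp
  have bfB: "bf (W + D) y y = bf W y y + (\<Sum>i\<in>UNIV. d i * (y$i)^2)"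
    unfolding bf_addm bf_diag[OF Ddg] d_def by (simp add: power2_eq_square algebra_simps)
  define \<alpha> where "\<alpha> = - bf (W + D) y y"
  have apos: "\<alpha> > 0" using yneg unfolding \<alpha>_def by simp
  define p where "p i = ((y$i)^2 + (y$i)^4)/2" for i
  define P where "P = (\<Sum>i\<in>UNIV. \<Sum>j\<in>UNIV. W$i$j * p i * p j)"
  define K where "K = (\<Sum>i\<in>UNIV. \<bar>d i\<bar> * (y$i)^4) + P"
  have Kn: "0 \<le> K" unfolding K_def P_def p_def using nn
    by (intro add_nonneg_nonneg sum_nonneg) auto
  define s where "s = min 1 (\<alpha> / (K + 1))"
  have spos: "0 < s" and s1: "s \<le> 1" unfolding s_def using apos Kn by auto
  have sK: "K * s < \<alpha>"
  proof -
    have "K * s \<le> K * (\<alpha> / (K + 1))" unfolding s_def using Kn by (intro mult_left_mono) auto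
    also have "\<dots> < \<alpha>" using Kn apos by (simp add: field_simps)
    finally show ?thesis .
  qed
  define e where "e i = s * (y$i)^2" for i
  define q where "q i = e i / 2 + (e i)^2 / 2" for i
  define r where "r i = (e i)^2 * (3/4 - e i / 2 - (e i)^2 / 4)" for i
  define w where "w = (\<chi> i. v$i * (1 - q i))"
  have e01: "0 \<le> e i" "e i \<le> 1" for i
  proof -
    show "0 \<le> e i" unfolding e_def using spos by simp
    have "s * (y$i)^2 \<le> 1 * 1" by (rule mult_mono) (use s1 yb spos in auto)
    thus "e i \<le> 1" unfolding e_def by simp
  qed
  have rn: "0 \<le> r i" for i
  proof -
    have "e i / 2 \<le> 1/2" "(e i)^2/4 \<le> 1/4" using e01[of i] by (auto simp: power_le_one)
    thus ?thesis unfolding r_def by (intro mult_nonneg_nonneg) auto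
  qed
  have qn: "0 \<le> q i" for i unfolding q_def using e01[of i] by simp
  have qp: "q i \<le> s * p i" for i
  proof -
    have "(e i)^2 = s^2 * (y$i)^4" unfolding e_def by (simp add: power_mult_distrib power2_eq_square power4_eq_xxxx)
    moreover have "s^2 * (y$i)^4 \<le> s * (y$i)^4"
      using spos s1 by (intro mult_right_mono) (auto simp: power2_eq_square)
    ultimately show ?thesis unfolding q_def p_def e_def by (simp add: field_simps)
  qed
  define O1 where "O1 = (\<chi> i j. w$i * w$j * (1::real))"
  define O2 where "O2 = (\<chi> i j. y$i * y$j * s)"
  define R where "R = (\<chi> i j. if i = j then r i else (0::real))"
  define Q where "Q = O1 + O2 + R"
  have Rdg: "diagonal_mat R" unfolding R_def diagonal_mat_def by simp
  have sQ: "sym_mat Q" unfolding Q_def O1_def O2_def R_def sym_mat_def by (simp add: mult.commute)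
  have "0 \<le> bf Q z z" for z
  proof -
    have "bf Q z z = (w \<bullet> z) * (w \<bullet> z) * 1 + (y \<bullet> z) * (y \<bullet> z) * s + (\<Sum>i\<in>UNIV. z$i * R$i$i * z$i)"
      unfolding Q_def bf_addm O1_def O2_def bf_outer bf_diag[OF Rdg] by simp
    also have "\<dots> \<ge> 0" using spos rn unfolding R_def
      by (intro add_nonneg_nonneg sum_nonneg) (auto simp: mult.commute mult.left_commute)
    finally show ?thesis .
  qed
  hence pQ: "psd Q" using sQ unfolding psd_def by (simp add: inner_mv)
  have Qd: "Q$i$i = 1" for i
  proof -
    have "Q$i$i = (v$i)^2 * (1 - q i)^2 + e i + r i"
      unfolding Q_def O1_def O2_def R_def w_def e_def by (simp add: power2_eq_square algebra_simps)
    also have "\<dots> = (1 - (e i/2 + (e i)^2/2))^2 + e i + (e i)^2*(3/4 - e i/2 - (e i)^2/4)"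
      using v[rule_format, of i] unfolding q_def r_def by auto
    also have "\<dots> = 1" by (rule diag_poly)
    finally show ?thesis .
  qed
  have fQ: "gw_feasible Q" unfolding gw_feasible_def using pQ Qd by simp
  have lb: "bf W v v \<le> gw_objective W Q" by (rule opt[OF fQ])
  define T where "T i j = W$i$j * v$i * v$j - W$i$j * v$i * v$j * q i - W$i$j * v$i * v$j * q j
      + s^2 * W$i$j * p i * p j + s * (W$i$j * y$i * y$j)" for i j
  have QT: "Q$i$j * W$i$j \<le> T i j" for i j
  proof -
    have "Q$i$j * W$i$j = W$i$j * (v$i * v$j * (1 - q i) * (1 - q j)) + s * (W$i$j * y$i * y$j)"
      using zd unfolding Q_def O1_def O2_def R_def w_def by (auto simp: algebra_simps)
    also have "\<dots> \<le> T i j" unfolding T_def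
      using term_bound[of "W$i$j" "v$i" "v$j" "q i" s "p i" "q j" "p j"] nn v qn qp by auto
    finally show ?thesis .
  qed
  have sumT: "gw_objective W Q \<le> (\<Sum>i\<in>UNIV. \<Sum>j\<in>UNIV. T i j)"
    unfolding gw_objective_def by (intro sum_mono) (rule QT)
  define G where "G = (\<Sum>i\<in>UNIV. q i * v$i * g i)"
  have symW: "\<And>i j. W$i$j = W$j$i" using sW unfolding sym_mat_def by blast
  have pA: "(\<Sum>i\<in>UNIV. \<Sum>j\<in>UNIV. W$i$j * v$i * v$j) = bf W v v"
    unfolding bf_def by (simp add: ac_simps)
  have pB: "(\<Sum>i\<in>UNIV. \<Sum>j\<in>UNIV. W$i$j * v$i * v$j * q i) = G"
    unfolding G_def g_def by (simp add: sum_distrib_left ac_simps)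
  have pC: "(\<Sum>i\<in>UNIV. \<Sum>j\<in>UNIV. W$i$j * v$i * v$j * q j) = G"
  proof -
    have "(\<Sum>i\<in>UNIV. \<Sum>j\<in>UNIV. W$i$j * v$i * v$j * q j) = (\<Sum>j\<in>UNIV. \<Sum>i\<in>UNIV. W$i$j * v$i * v$j * q j)"
      by (rule sum.swap)
    also have "\<dots> = (\<Sum>j\<in>UNIV. \<Sum>i\<in>UNIV. W$j$i * v$j * v$i * q j)"
      by (intro sum.cong refl) (simp add: symW[of _ ] ac_simps)
    also have "\<dots> = G" unfolding G_def g_def by (simp add: sum_distrib_left ac_simps)
    finally show ?thesis .
  qed
  have pD: "(\<Sum>i\<in>UNIV. \<Sum>j\<in>UNIV. s^2 * W$i$j * p i * p j) = s^2 * P"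
    unfolding P_def by (simp add: sum_distrib_left ac_simps)
  have pE: "(\<Sum>i\<in>UNIV. \<Sum>j\<in>UNIV. s * (W$i$j * y$i * y$j)) = s * bf W y y"
    unfolding bf_def by (simp add: sum_distrib_left ac_simps)
  have sumT2: "(\<Sum>i\<in>UNIV. \<Sum>j\<in>UNIV. T i j) = bf W v v - G - G + s^2 * P + s * bf W y y"
    unfolding T_def by (simp add: sum.distrib sum_subtractf pA pB pC pD pE)
  have Gb: "- 2 * G \<le> s * (\<Sum>i\<in>UNIV. d i * (y$i)^2) + s^2 * (\<Sum>i\<in>UNIV. \<bar>d i\<bar> * (y$i)^4)"
  proof -
    have "- 2 * G = (\<Sum>i\<in>UNIV. 2 * q i * d i)"
      unfolding G_def dg by (simp add: sum_distrib_left sum_negf[symmetric] ac_simps)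
    also have "\<dots> \<le> (\<Sum>i\<in>UNIV. s * (d i * (y$i)^2) + s^2 * (\<bar>d i\<bar> * (y$i)^4))"
    proof (intro sum_mono)
      fix i
      have "2 * q i * d i = s * (d i * (y$i)^2) + s^2 * (d i * (y$i)^4)"
        unfolding q_def e_def by (simp add: power_mult_distrib power2_eq_square power4_eq_xxxx algebra_simps)
      also have "s^2 * (d i * (y$i)^4) \<le> s^2 * (\<bar>d i\<bar> * (y$i)^4)"
        by (intro mult_left_mono mult_right_mono) auto
      finally show "2 * q i * d i \<le> s * (d i * (y$i)^2) + s^2 * (\<bar>d i\<bar> * (y$i)^4)" by simp
    qed
    also have "\<dots> = s * (\<Sum>i\<in>UNIV. d i * (y$i)^2) + s^2 * (\<Sum>i\<in>UNIV. \<bar>d i\<bar> * (y$i)^4)"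
      by (simp add: sum.distrib sum_distrib_left)
    finally show ?thesis .
  qed
  have "gw_objective W Q \<le> bf W v v + s * (bf W y y + (\<Sum>i\<in>UNIV. d i * (y$i)^2)) + s^2 * K"
    using sumT sumT2 Gb unfolding K_def by (simp add: algebra_simps)
  also have "\<dots> = bf W v v - s * \<alpha> + s * (K * s)"
    unfolding \<alpha>_def bfB by (simp add: power2_eq_square algebra_simps)
  also have "\<dots> < bf W v v" using sK spos by (simp add: mult_strict_left_mono)
  finally show False using lb by simp
qed

lemma bf_g: "bf W v v = (\<Sum>i\<in>UNIV. v$i * (\<Sum>k\<in>UNIV. W$i$k * v$k))"
  unfolding bf_def by (simp add: sum_distrib_left mult.assoc)

theorem theorem7:
  fixes W :: "real^'n^'n" and S :: "'n set" and v :: "real^'n" and D :: "real^'n^'n"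
  assumes "maxcut_instance W"
    and "maximal_cut W S"
    and "v = char_vec S"
    and "D = (\<chi> i j. if i = j then - v$i * (\<Sum>k\<in>UNIV. W$i$k * v$k) else 0)"
  shows "(gw_bipolar W \<longleftrightarrow> generalized_least_eigenvector W v)
       \<and> (generalized_least_eigenvector W v \<longleftrightarrow> psd (W + D))
       \<and> (psd (W + D) \<longleftrightarrow> gw_dual_optimal_at W (- D))"
proof -
  have sW: "sym_mat W" and nn: "\<forall>i j. 0 \<le> W$i$j" and zd: "\<forall>i. W$i$i = 0"
    using assms(1) unfolding maxcut_instance_def by auto
  note Dd = assms(4)
  have v: "\<forall>i. v$i = 1 \<or> v$i = -1" unfolding assms(3) char_vec_def by simp
  have vsq: "v$i * v$i = 1" for i using v[rule_format, of i] by auto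
  have Ddg: "diagonal_mat D" unfolding Dd diagonal_mat_def by simp
  have sB: "sym_mat (W + D)" using sW unfolding Dd sym_mat_def by simp
  have trD: "(\<Sum>i\<in>UNIV. D$i$i) = - bf W v v" unfolding bf_g Dd by (simp add: sum_negf)
  have WDv: "(W + D) *v v = 0"
  proof -
    have "(W *v v)$i + D$i$i * v$i = 0" for i
      using vsq[of i] unfolding Dd by (simp add: matrix_vector_mult_def algebra_simps)
    thus ?thesis using diag_mv[OF Ddg, of v]
      by (simp add: matrix_vector_mult_add_rdistrib vec_eq_iff)
  qed
  have vne: "v \<noteq> 0"
  proof
    assume "v = 0"
    hence "v$i = 0" for i by simp
    thus False using v by force
  qed
  have e23: "generalized_least_eigenvector W v \<longleftrightarrow> psd (W + D)"
  proof
    assume "generalized_least_eigenvector W v"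
    thus "psd (W + D)" by (rule gle_to_psd[OF sW v Dd])
  next
    assume p: "psd (W + D)"
    have "lam \<ge> 0" if "x \<noteq> 0" "(W + D) *v x = lam *\<^sub>R x" for lam x
    proof -
      have "0 \<le> x \<bullet> ((W + D) *v x)" using p unfolding psd_def by blast
      also have "\<dots> = lam * (x \<bullet> x)" using that by simp
      finally have "0 \<le> lam * (x \<bullet> x)" .
      moreover have "0 < x \<bullet> x" using that by simp
      ultimately show ?thesis by (simp add: zero_le_mult_iff)
    qed
    thus "generalized_least_eigenvector W v" unfolding generalized_least_eigenvector_def
      using Ddg vne WDv by (intro exI[of _ D] exI[of _ 0]) auto
  qed
  have e34: "psd (W + D) \<longleftrightarrow> gw_dual_optimal_at W (- D)"
  proof
    assume p: "psd (W + D)"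
    have "diagonal_mat (- D)" using Ddg unfolding diagonal_mat_def by simp
    moreover have "psd (W - - D)" using p by simp
    moreover have "(\<Sum>i\<in>UNIV. F$i$i) \<le> (\<Sum>i\<in>UNIV. (- D)$i$i)" if "gw_dual_feasible W F" for F
    proof -
      have dF: "diagonal_mat F" and pF: "psd (W - F)" using that unfolding gw_dual_feasible_def by auto
      have "0 \<le> bf (W - F) v v" by (rule psd_nonneg[OF pF])
      also have "\<dots> = bf W v v - (\<Sum>i\<in>UNIV. F$i$i)"
      proof -
        have "(\<Sum>i\<in>UNIV. v$i * F$i$i * v$i) = (\<Sum>i\<in>UNIV. F$i$i)"
          by (intro sum.cong refl) (metis mult.commute mult.left_commute mult_1_right vsq)
        thus ?thesis unfolding bf_diff bf_diag[OF dF] by simp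
      qed
      finally show ?thesis using trD by (simp add: sum_negf)
    qed
    ultimately show "gw_dual_optimal_at W (- D)" unfolding gw_dual_optimal_at_def gw_dual_feasible_def by blast
  next
    assume "gw_dual_optimal_at W (- D)"
    thus "psd (W + D)" unfolding gw_dual_optimal_at_def gw_dual_feasible_def by simp
  qed
  have e13: "gw_bipolar W \<longleftrightarrow> psd (W + D)"
  proof
    assume "gw_bipolar W"
    then obtain u :: "real^'n" where u: "\<forall>i. u$i = 1 \<or> u$i = -1" and ou: "gw_primal_optimal W (outer u)"
      unfolding gw_bipolar_def by blast
    define T where "T = {i. u$i = 1}"
    have uT: "u = char_vec T"
    proof (rule iffD2[OF vec_eq_iff], intro allI)
      fix i show "u$i = char_vec T $ i" using u[rule_format, of i] unfolding char_vec_def T_def by auto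
    qed
    have "cut_weight W T \<le> cut_weight W S" using assms(2) unfolding maximal_cut_def by blast
    moreover have "bf W u u = (\<Sum>i\<in>UNIV. \<Sum>j\<in>UNIV. W$i$j) - 4 * cut_weight W T"
      using cut_formula[OF sW, of T] by (simp only: uT[symmetric])
    moreover have "bf W v v = (\<Sum>i\<in>UNIV. \<Sum>j\<in>UNIV. W$i$j) - 4 * cut_weight W S"
      unfolding assms(3) by (rule cut_formula[OF sW])
    ultimately have vu: "bf W v v \<le> bf W u u" by linarith
    show "psd (W + D)"
    proof (rule perturb[OF sW zd nn v Dd])
      fix Q :: "real^'n^'n" assume "gw_feasible Q"
      hence "gw_objective W (outer u) \<le> gw_objective W Q" using ou unfolding gw_primal_optimal_def by blast
      thus "bf W v v \<le> gw_objective W Q" using vu by (simp add: obj_outer)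
    qed
  next
    assume p: "psd (W + D)"
    have "gw_objective W (outer v) \<le> gw_objective W Q" if fQ: "gw_feasible Q" for Q
    proof -
      have pQ: "psd Q" and Qd: "\<And>i. Q$i$i = 1" using fQ unfolding gw_feasible_def by auto
      have "0 \<le> (\<Sum>i\<in>UNIV. \<Sum>j\<in>UNIV. Q$i$j * (W + D)$i$j)" by (rule trace_psd[OF pQ p])
      also have "\<dots> = gw_objective W Q + (\<Sum>i\<in>UNIV. \<Sum>j\<in>UNIV. Q$i$j * D$i$j)"
        unfolding gw_objective_def by (simp add: algebra_simps sum.distrib)
      also have "(\<Sum>i\<in>UNIV. \<Sum>j\<in>UNIV. Q$i$j * D$i$j) = (\<Sum>i\<in>UNIV. D$i$i)"
      proof (intro sum.cong refl)
        fix i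
        have "(\<Sum>j\<in>UNIV. Q$i$j * D$i$j) = (\<Sum>j\<in>UNIV. if j = i then Q$i$i * D$i$i else 0)"
          using Ddg unfolding diagonal_mat_def by (intro sum.cong) auto
        thus "(\<Sum>j\<in>UNIV. Q$i$j * D$i$j) = D$i$i" using Qd[of i] by (simp add: sum.delta')
      qed
      finally show ?thesis using trD by (simp add: obj_outer)
    qed
    thus "gw_bipolar W" unfolding gw_bipolar_def gw_primal_optimal_def
      using v feas_outer[OF v] by blast
  qed
  show ?thesis using e13 e23 e34 by blast
qed

end
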